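(* Let $((f_t),(g_t),(h_t))$ be a $W_{1,+}$-geodesic on $G$, let $x\in G$, $\gamma\in\mathrm{SE}\Gamma_{1,x}$ and $\tilde\gamma\in\mathrm{SE}\Gamma_{2,x}$. Then for all $t\in[0,1]$, $$f_t(x)=\frac{C_\gamma(t)\,C_{\tilde\gamma}(t)}{C_{\gamma\cup\tilde\gamma}},$$ where $\gamma\cup\tilde\gamma$ is the concatenation of $\gamma$ and $\tilde\gamma$ (an extremal path, for which $C_{\gamma\cup\tilde\gamma}(t)$ is constant).
   Context: $G$ is a connected, locally finite graph with graph distance $d$; geodesics are paths of adjacent vertices $\gamma(0),\dots,\gamma(n)$ with $n=d(\gamma(0),\gamma(n))$, $L(\gamma)=n$, $e_0(\gamma)=\gamma(0)$, $e_1(\gamma)=\gamma(n)$. For finitely supported probability distributions $f_0,f_1$: $\Pi_1(f_0,f_1)$ = couplings minimizing $\sum d(x,y)\pi(x,y)$ (minimum $W_1$), $\mathcal{C}(f_0,f_1)=\{(x,y):\pi(x,y)>0$ for some $\pi\in\Pi_1\}$; $W_1$-orientation: adjacent $x,y$ get $x\to y$ iff some geodesic $\gamma$ with $(e_0(\gamma),e_1(\gamma))\in\mathcal{C}(f_0,f_1)$ has $\gamma(k)=x,\gamma(k+1)=y$. Oriented paths: $\gamma(i)\to\gamma(i+1)$; $\gamma_i=\gamma(i)$. $E(G)=\{(xy):x\to y\}$, $T(G)$ triples $x_0\to x_1\to x_2$, $\mathcal{F}(x)=\{y:x\to y\}$, $\mathcal{E}(x)=\{y:y\to x\}$; $\nabla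 g(x_1)=\sum_{\mathcal{F}(x_1)}g(x_1x_2)-\sum_{\mathcal{E}(x_1)}g(x_0x_1)$, $\nabla h(x_1x_2)=\sum_{x_3\in\mathcal{F}(x_2)}h(x_1x_2x_3)-\sum_{x_0\in\mathcal{E}(x_1)}h(x_0x_1x_2)$. $W_{1,+}$-geodesic: a family $(f_t)_{t\in[0,1]}$ from $f_0$ to $f_1$ with $W_1(f_s,f_t)=|t-s|W_1(f_0,f_1)$ (graph $W_1$-oriented w.r.t. $(f_0,f_1)$), differentiable in $t$, with $g_t$ on $E(G)$, $h_t$ on $T(G)$, $\partial_tf_t=-\nabla g_t$, $\partial_tg_t=-\nabla h_t$, $g_t>0$, $f_t(x_1)h_t(x_0x_1x_2)=g_t(x_0x_1)g_t(x_1x_2)$. $C_\gamma(t)=f_t(\gamma_0)$ if $L(\gamma)=0$, $g_t(\gamma_0\gamma_1)$ if $L(\gamma)=1$, $\prod_{i=0}^{n-1}g_t(\gamma_i\gamma_{i+1})/\prod_{j=1}^{n-1}f_t(\gamma_j)$ if $n\ge2$. $\mathcal{A}=\{x:\mathcal{E}(x)=\emptyset\}$, $\mathcal{B}=\{x:\mathcal{F}(x)=\emptyset\}$; extremal oriented paths start in $\mathcal{A}$ and end in $\mathcal{B}$; $\mathrm{SE}\Gamma_{1,x}$: oriented paths from a vertex of $\mathcal{A}$ to $x$; $\mathrm{SE}\Gamma_{2,x}$: oriented paths from $x$ to a vertex of $\mathcal{B}$. *)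

theory Defs
  imports "HOL-Analysis.Analysis"
begin

definition is_walk :: "('a \<Rightarrow> 'a \<Rightarrow> bool) \<Rightarrow> 'a list \<Rightarrow> bool" where
  "is_walk adj xs \<longleftrightarrow> xs \<noteq> [] \<and> successively adj xs"

definition conn_locfin_graph :: "('a \<Rightarrow> 'a \<Rightarrow> bool) \<Rightarrow> bool" where
  "conn_locfin_graph adj \<longleftrightarrow>
     (\<forall>x y. adj x y \<longrightarrow> adj y x) \<and> (\<forall>x. \<not> adj x x) \<and>
     (\<forall>x. finite {y. adj x y}) \<and>
     (\<forall>x y. \<exists>xs. is_walk adj xs \<and> hd xs = x \<and> last xs = y)"

definition gdist :: "('a \<Rightarrow> 'a \<Rightarrow> bool) \<Rightarrow> 'a \<Rightarrow> 'a \<Rightarrow> nat" where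
  "gdist adj x y = (LEAST n. \<exists>xs. is_walk adj xs \<and> hd xs = x \<and> last xs = y \<and> length xs = Suc n)"

definition is_geodesic :: "('a \<Rightarrow> 'a \<Rightarrow> bool) \<Rightarrow> 'a list \<Rightarrow> bool" where
  "is_geodesic adj \<gamma> \<longleftrightarrow> is_walk adj \<gamma> \<and> length \<gamma> = Suc (gdist adj (hd \<gamma>) (last \<gamma>))"

definition fin_prob :: "('a \<Rightarrow> real) \<Rightarrow> bool" where
  "fin_prob f \<longleftrightarrow> (\<forall>x. 0 \<le> f x) \<and> finite {x. f x \<noteq> 0} \<and> (\<Sum>x\<in>{x. f x \<noteq> 0}. f x) = 1"

definition coupling :: "('a \<Rightarrow> real) \<Rightarrow> ('a \<Rightarrow> real) \<Rightarrow> ('a \<Rightarrow> 'a \<Rightarrow> real) \<Rightarrow> bool" where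
  "coupling f0 f1 \<pi> \<longleftrightarrow> (\<forall>x y. 0 \<le> \<pi> x y) \<and> finite {(x, y). \<pi> x y \<noteq> 0} \<and>
     (\<forall>x. (\<Sum>y\<in>{y. \<pi> x y \<noteq> 0}. \<pi> x y) = f0 x) \<and>
     (\<forall>y. (\<Sum>x\<in>{x. \<pi> x y \<noteq> 0}. \<pi> x y) = f1 y)"

definition transport_cost :: "('a \<Rightarrow> 'a \<Rightarrow> bool) \<Rightarrow> ('a \<Rightarrow> 'a \<Rightarrow> real) \<Rightarrow> real" where
  "transport_cost adj \<pi> = (\<Sum>(x, y)\<in>{(x, y). \<pi> x y \<noteq> 0}. real (gdist adj x y) * \<pi> x y)"

definition W1 :: "('a \<Rightarrow> 'a \<Rightarrow> bool) \<Rightarrow> ('a \<Rightarrow> real) \<Rightarrow> ('a \<Rightarrow> real) \<Rightarrow> real" where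
  "W1 adj f0 f1 = Inf {transport_cost adj \<pi> | \<pi>. coupling f0 f1 \<pi>}"

definition opt_couplings :: "('a \<Rightarrow> 'a \<Rightarrow> bool) \<Rightarrow> ('a \<Rightarrow> real) \<Rightarrow> ('a \<Rightarrow> real) \<Rightarrow> ('a \<Rightarrow> 'a \<Rightarrow> real) set" where
  "opt_couplings adj f0 f1 = {\<pi>. coupling f0 f1 \<pi> \<and> transport_cost adj \<pi> = W1 adj f0 f1}"

definition opt_supp :: "('a \<Rightarrow> 'a \<Rightarrow> bool) \<Rightarrow> ('a \<Rightarrow> real) \<Rightarrow> ('a \<Rightarrow> real) \<Rightarrow> ('a \<times> 'a) set" where
  "opt_supp adj f0 f1 = {(x, y). \<exists>\<pi>\<in>opt_couplings adj f0 f1. \<pi> x y > 0}"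

definition arr :: "('a \<Rightarrow> 'a \<Rightarrow> bool) \<Rightarrow> ('a \<Rightarrow> real) \<Rightarrow> ('a \<Rightarrow> real) \<Rightarrow> 'a \<Rightarrow> 'a \<Rightarrow> bool" where
  "arr adj f0 f1 x y \<longleftrightarrow> adj x y \<and>
     (\<exists>\<gamma> k. is_geodesic adj \<gamma> \<and> (hd \<gamma>, last \<gamma>) \<in> opt_supp adj f0 f1 \<and>
            Suc k < length \<gamma> \<and> \<gamma> ! k = x \<and> \<gamma> ! Suc k = y)"

definition Fwd :: "('a \<Rightarrow> 'a \<Rightarrow> bool) \<Rightarrow> 'a \<Rightarrow> 'a set" where
  "Fwd R x = {y. R x y}"

definition Bwd :: "('a \<Rightarrow> 'a \<Rightarrow> bool) \<Rightarrow> 'a \<Rightarrow> 'a set" where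
  "Bwd R x = {y. R y x}"

definition grad_v :: "('a \<Rightarrow> 'a \<Rightarrow> bool) \<Rightarrow> ('a \<Rightarrow> 'a \<Rightarrow> real) \<Rightarrow> 'a \<Rightarrow> real" where
  "grad_v R g x1 = (\<Sum>x2\<in>Fwd R x1. g x1 x2) - (\<Sum>x0\<in>Bwd R x1. g x0 x1)"

definition grad_e :: "('a \<Rightarrow> 'a \<Rightarrow> bool) \<Rightarrow> ('a \<Rightarrow> 'a \<Rightarrow> 'a \<Rightarrow> real) \<Rightarrow> 'a \<Rightarrow> 'a \<Rightarrow> real" where
  "grad_e R h x1 x2 = (\<Sum>x3\<in>Fwd R x2. h x1 x2 x3) - (\<Sum>x0\<in>Bwd R x1. h x0 x1 x2)"

definition oriented_path :: "('a \<Rightarrow> 'a \<Rightarrow> bool) \<Rightarrow> 'a list \<Rightarrow> bool" where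
  "oriented_path R \<gamma> \<longleftrightarrow> \<gamma> \<noteq> [] \<and> successively R \<gamma>"

definition sources :: "('a \<Rightarrow> 'a \<Rightarrow> bool) \<Rightarrow> 'a set" where
  "sources R = {x. Bwd R x = {}}"

definition sinks :: "('a \<Rightarrow> 'a \<Rightarrow> bool) \<Rightarrow> 'a set" where
  "sinks R = {x. Fwd R x = {}}"

definition SEGamma1 :: "('a \<Rightarrow> 'a \<Rightarrow> bool) \<Rightarrow> 'a \<Rightarrow> 'a list set" where
  "SEGamma1 R x = {\<gamma>. oriented_path R \<gamma> \<and> hd \<gamma> \<in> sources R \<and> last \<gamma> = x}"

definition SEGamma2 :: "('a \<Rightarrow> 'a \<Rightarrow> bool) \<Rightarrow> 'a \<Rightarrow> 'a list set" where
  "SEGamma2 R x = {\<gamma>. oriented_path R \<gamma> \<and> hd \<gamma> = x \<and> last \<gamma> \<in> sinks R}"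

text \<open>Concatenation of gamma (ending at x) with gamma' (starting at x).\<close>
definition path_concat :: "'a list \<Rightarrow> 'a list \<Rightarrow> 'a list" where
  "path_concat \<gamma> \<gamma>' = \<gamma> @ tl \<gamma>'"

definition W1plus_geodesic ::
  "('a \<Rightarrow> 'a \<Rightarrow> bool) \<Rightarrow> (real \<Rightarrow> 'a \<Rightarrow> real) \<Rightarrow> (real \<Rightarrow> 'a \<Rightarrow> 'a \<Rightarrow> real)
     \<Rightarrow> (real \<Rightarrow> 'a \<Rightarrow> 'a \<Rightarrow> 'a \<Rightarrow> real) \<Rightarrow> bool" where
  "W1plus_geodesic adj f g h \<longleftrightarrow>
     (let R = arr adj (f 0) (f 1) in
       (\<forall>t\<in>{0..1}. fin_prob (f t)) \<and>
       (\<forall>s\<in>{0..1}. \<forall>t\<in>{0..1}. W1 adj (f s) (f t) = \<bar>t - s\<bar> * W1 adj (f 0) (f 1)) \<and>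
       (\<forall>x. \<forall>t\<in>{0..1}. ((\<lambda>u. f u x) has_real_derivative - grad_v R (g t) x) (at t within {0..1})) \<and>
       (\<forall>x y. R x y \<longrightarrow> (\<forall>t\<in>{0..1}.
            ((\<lambda>u. g u x y) has_real_derivative - grad_e R (h t) x y) (at t within {0..1}))) \<and>
       (\<forall>x y. R x y \<longrightarrow> (\<forall>t\<in>{0..1}. g t x y > 0)) \<and>
       (\<forall>x0 x1 x2. R x0 x1 \<and> R x1 x2 \<longrightarrow>
            (\<forall>t\<in>{0..1}. f t x1 * h t x0 x1 x2 = g t x0 x1 * g t x1 x2)))"

text \<open>C_gamma(t) for an oriented path gamma = gamma_0,...,gamma_n (list of length n+1).\<close>
definition Cpath :: "(real \<Rightarrow> 'a \<Rightarrow> real) \<Rightarrow> (real \<Rightarrow> 'a \<Rightarrow> 'a \<Rightarrow> real) \<Rightarrow> 'a list \<Rightarrow> real \<Rightarrow> real" where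
  "Cpath f g \<gamma> t =
     (if length \<gamma> = 1 then f t (\<gamma> ! 0)
      else if length \<gamma> = 2 then g t (\<gamma> ! 0) (\<gamma> ! 1)
      else (\<Prod>i<length \<gamma> - 1. g t (\<gamma> ! i) (\<gamma> ! Suc i)) / (\<Prod>j\<in>{1..<length \<gamma> - 1}. f t (\<gamma> ! j)))"

end

theory Submission
  imports Defs
begin

fun gp :: "('a \<Rightarrow> 'a \<Rightarrow> real) \<Rightarrow> 'a list \<Rightarrow> real" where
  "gp G (a # b # xs) = G a b * gp G (b # xs)"
| "gp G _ = 1"

lemma gp_idx: "(\<Prod>i<length xs - 1. G (xs ! i) (xs ! Suc i)) = gp G xs"
proof (induction G xs rule: gp.induct)
  case (1 G a b xs)
  have "(\<Prod>i<length (a # b # xs) - 1. G ((a # b # xs) ! i) ((a # b # xs) ! Suc i))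
      = (\<Prod>i<Suc (length (b#xs) - 1). G ((a # b # xs) ! i) ((a # b # xs) ! Suc i))" by simp
  also have "\<dots> = G a b * (\<Prod>i<length (b#xs) - 1. G ((b # xs) ! i) ((b # xs) ! Suc i))"
    by (subst prod.lessThan_Suc_shift) simp
  finally show ?case using 1 by simp
qed auto

lemma prodlist_idx: "(\<Prod>j<length ys. F (ys ! j)) = prod_list (map F ys)"
proof (induction ys)
  case (Cons a ys)
  then show ?case by (simp add: prod.lessThan_Suc_shift del: prod.lessThan_Suc)
qed simp

lemma fint_idx:
  "(\<Prod>j\<in>{1..<length xs - 1}. F (xs ! j)) = prod_list (map F (butlast (tl xs)))"
proof (cases xs)
  case Nil then show ?thesis by simp
next
  case (Cons a ys)
  have "(\<Prod>j\<in>{1..<length xs - 1}. F (xs ! j)) = (\<Prod>j\<in>{Suc 0..<Suc (length ys - 1)}. F ((a#ys) ! j))"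
    using Cons by (cases ys) auto
  also have "\<dots> = (\<Prod>j\<in>{0..<length ys - 1}. F (ys ! j))"
    by (simp only: prod.shift_bounds_Suc_ivl o_def nth_Cons_Suc)
  also have "\<dots> = (\<Prod>j<length (butlast ys). F (butlast ys ! j))"
    by (intro prod.cong) (auto simp: nth_butlast atLeast0LessThan)
  also have "\<dots> = prod_list (map F (butlast (tl xs)))" using Cons prodlist_idx[of F "butlast ys"] by simp
  finally show ?thesis .
qed

lemma Cpath_eq:
  assumes "length xs \<ge> 2"
  shows "Cpath f g xs t = gp (g t) xs / prod_list (map (f t) (butlast (tl xs)))"
  using assms unfolding Cpath_def gp_idx fint_idx
  by (cases xs rule: remdups_adj.cases) auto

lemma gp_append:
  "xs \<noteq> [] \<Longrightarrow> ys \<noteq> [] \<Longrightarrow> last xs = hd ys \<Longrightarrow> gp G (xs @ tl ys) = gp G xs * gp G ys"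
  by (induction G xs rule: gp.induct) (auto simp: neq_Nil_conv)

lemma gp_pos:
  "successively R xs \<Longrightarrow> (\<And>a b. R a b \<Longrightarrow> G a b > 0) \<Longrightarrow> gp G xs > 0"
  by (induction G xs rule: gp.induct) auto

lemma interior_nbrs:
  "successively R xs \<Longrightarrow> v \<in> set (butlast (tl xs)) \<Longrightarrow> \<exists>u w. R u v \<and> R v w"
proof (induction xs rule: remdups_adj.induct)
  case (3 a b xs)
  show ?case
  proof (cases "v = b")
    case True
    with 3 show ?thesis by (cases xs) auto
  next
    case False
    with 3 show ?thesis by (cases xs) auto
  qed
qed auto

lemma prod_nz: "(\<And>v. v \<in> set ys \<Longrightarrow> F v \<noteq> 0) \<Longrightarrow> prod_list (map F (ys::'a list)) \<noteq> (0::real)"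
  by (induction ys) auto

theorem proposition3p9:
  fixes adj :: "'a \<Rightarrow> 'a \<Rightarrow> bool"
    and f :: "real \<Rightarrow> 'a \<Rightarrow> real" and g :: "real \<Rightarrow> 'a \<Rightarrow> 'a \<Rightarrow> real"
    and h :: "real \<Rightarrow> 'a \<Rightarrow> 'a \<Rightarrow> 'a \<Rightarrow> real"
    and x :: 'a and \<gamma> \<gamma>' :: "'a list" and t :: real
  assumes "conn_locfin_graph adj"
    and "W1plus_geodesic adj f g h"
    and "\<gamma> \<in> SEGamma1 (arr adj (f 0) (f 1)) x"
    and "\<gamma>' \<in> SEGamma2 (arr adj (f 0) (f 1)) x"
    and "t \<in> {0..1}"
  shows "f t x = Cpath f g \<gamma> t * Cpath f g \<gamma>' t / Cpath f g (path_concat \<gamma> \<gamma>') t"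
proof -
  define R where "R = arr adj (f 0) (f 1)"
  have gpos: "\<And>a b. R a b \<Longrightarrow> g t a b > 0"
    using assms(2,5) unfolding W1plus_geodesic_def R_def Let_def by blast
  have fnz: "\<And>u v w. R u v \<Longrightarrow> R v w \<Longrightarrow> f t v \<noteq> 0"
  proof
    fix u v w assume "R u v" "R v w" "f t v = 0"
    then have "f t v * h t u v w = g t u v * g t v w"
      using assms(2,5) unfolding W1plus_geodesic_def R_def Let_def by blast
    with \<open>f t v = 0\<close> gpos[OF \<open>R u v\<close>] gpos[OF \<open>R v w\<close>] show False by simp
  qed
  have g1: "\<gamma> \<noteq> []" "successively R \<gamma>" "last \<gamma> = x"
    using assms(3) unfolding SEGamma1_def oriented_path_def R_def by auto
  have g2: "\<gamma>' \<noteq> []" "successively R \<gamma>'" "hd \<gamma>' = x"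
    using assms(4) unfolding SEGamma2_def oriented_path_def R_def by auto
  have intnz: "prod_list (map (f t) (butlast (tl xs))) \<noteq> 0" if sx: "successively R xs" for xs
  proof (rule prod_nz)
    fix v assume "v \<in> set (butlast (tl xs))"
    then obtain u w where "R u v" "R v w" using interior_nbrs[OF sx] by blast
    then show "f t v \<noteq> 0" by (rule fnz)
  qed
  have Cnz: "Cpath f g xs t \<noteq> 0" if "successively R xs" "length xs \<ge> 2" for xs
  proof -
    have "gp (g t) xs > 0" using gp_pos[OF that(1) gpos] .
    moreover have "prod_list (map (f t) (butlast (tl xs))) \<noteq> 0" using intnz[OF that(1)] .
    ultimately show ?thesis unfolding Cpath_eq[OF that(2)] by simp
  qed
  show ?thesis
  proof (cases "length \<gamma> = 1")
    case True
    then have "\<gamma> = [x]" using g1 by (cases \<gamma>) auto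
    then have c: "path_concat \<gamma> \<gamma>' = \<gamma>'" using g2 unfolding path_concat_def by (cases \<gamma>') auto
    have C1: "Cpath f g \<gamma> t = f t x" using \<open>\<gamma> = [x]\<close> unfolding Cpath_def by simp
    show ?thesis
    proof (cases "length \<gamma>' = 1")
      case True
      then have "\<gamma>' = [x]" using g2 by (cases \<gamma>') auto
      then show ?thesis using C1 c unfolding Cpath_def by simp
    next
      case False
      then have "length \<gamma>' \<ge> 2" using g2 by (cases \<gamma>') (auto simp: Suc_le_eq)
      then show ?thesis using Cnz[OF g2(2)] C1 c by simp
    qed
  next
    case False
    then have L1: "length \<gamma> \<ge> 2" using g1 by (cases \<gamma>) (auto simp: Suc_le_eq)
    show ?thesis
    proof (cases "length \<gamma>' = 1")
      case True
      then have "\<gamma>' = [x]" using g2 by (cases \<gamma>') auto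
      then have c: "path_concat \<gamma> \<gamma>' = \<gamma>" unfolding path_concat_def by simp
      have C2: "Cpath f g \<gamma>' t = f t x" using \<open>\<gamma>' = [x]\<close> unfolding Cpath_def by simp
      show ?thesis using Cnz[OF g1(2) L1] C2 c by simp
    next
      case False
      then have L2: "length \<gamma>' \<ge> 2" using g2 by (cases \<gamma>') (auto simp: Suc_le_eq)
      obtain a ys where ga: "\<gamma> = a # ys" "ys \<noteq> []" "last ys = x"
        using L1 g1 by (cases \<gamma>; cases "tl \<gamma>") auto
      obtain zs where gb: "\<gamma>' = x # zs" "zs \<noteq> []"
        using L2 g2 by (cases \<gamma>') (auto simp: Suc_le_eq)
      have cc: "path_concat \<gamma> \<gamma>' = a # ys @ zs" using ga gb unfolding path_concat_def by simp
      have int: "butlast (tl (path_concat \<gamma> \<gamma>')) = butlast ys @ [x] @ butlast zs"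
        using cc ga gb by (simp add: butlast_append) (metis append_butlast_last_id)
      have Lc: "length (path_concat \<gamma> \<gamma>') \<ge> 2" using cc ga by (cases ys) auto
      have gpc: "gp (g t) (path_concat \<gamma> \<gamma>') = gp (g t) \<gamma> * gp (g t) \<gamma>'"
        unfolding path_concat_def using gp_append g1 g2 by metis
      define G1 where "G1 = gp (g t) \<gamma>"
      define G2 where "G2 = gp (g t) \<gamma>'"
      define I1 where "I1 = prod_list (map (f t) (butlast ys))"
      define I2 where "I2 = prod_list (map (f t) (butlast zs))"
      have "G1 > 0" "G2 > 0" unfolding G1_def G2_def using gp_pos[OF _ gpos] g1 g2 by auto
      moreover have "I1 \<noteq> 0" unfolding I1_def using intnz[OF g1(2)] ga by simp
      moreover have "I2 \<noteq> 0" unfolding I2_def using intnz[OF g2(2)] gb by simp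
      moreover have C1: "Cpath f g \<gamma> t = G1 / I1" unfolding G1_def I1_def using Cpath_eq[OF L1] ga by simp
      moreover have C2: "Cpath f g \<gamma>' t = G2 / I2" unfolding G2_def I2_def using Cpath_eq[OF L2] gb by simp
      moreover have C3: "Cpath f g (path_concat \<gamma> \<gamma>') t = G1 * G2 / (I1 * f t x * I2)"
        unfolding G1_def G2_def I1_def I2_def using Cpath_eq[OF Lc] int gpc by simp
      ultimately show ?thesis
        unfolding C1 C2 C3 by (cases "f t x = 0") (auto simp: field_simps)
    qed
  qed
qed

end
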